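(* Let $G=(V,E)$ be a finite simple undirected graph, let $M$ be the matching computed by a run of \textsc{MinGreedy} on $G$, and let $M^*$ be a maximum matching of $G$ such that every connected component of $(V,M\cup M^* )$ with an edge is either an edge of $M\cap M^*$ or an $M$-$M^*$-path. Let $w$ be an endpoint of an $M$-$M^*$-path. Then the degree of $w$ in $G$ satisfies $d_G(w)\geq 2$; in particular, $w$ is incident with an edge of $F=E\setminus(M\cup M^* )$.
   Context: \textsc{MinGreedy}: starting with $M=\emptyset$, repeatedly select an arbitrary node $u$ of minimum non-zero current degree and an arbitrary neighbor $v$ of $u$, add $\{u,v\}$ to $M$ and remove all edges incident with $u$ or $v$ from the current graph, until no edges remain. An $M$-$M^*$-path is a connected component of $(V,M\cup M^* )$ that is an alternating path starting and ending with an $M^*$-edge and containing $m\geq1$ edges of $M$ and $m+1$ edges of $M^*$; its endpoints are its two end nodes (which are not covered by $M$). *)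

theory Defs
  imports Main
begin

definition simple_graph :: "'a set \<Rightarrow> 'a set set \<Rightarrow> bool" where
  "simple_graph V E \<longleftrightarrow> finite V \<and>
     (\<forall>e\<in>E. \<exists>u v. e = {u, v} \<and> u \<noteq> v \<and> u \<in> V \<and> v \<in> V)"

definition degree :: "'a set set \<Rightarrow> 'a \<Rightarrow> nat" where
  "degree E x = card {e\<in>E. x \<in> e}"

definition matching :: "'a set set \<Rightarrow> bool" where
  "matching M \<longleftrightarrow> (\<forall>e1\<in>M. \<forall>e2\<in>M. e1 \<noteq> e2 \<longrightarrow> e1 \<inter> e2 = {})"

definition matching_of :: "'a set set \<Rightarrow> 'a set set \<Rightarrow> bool" where
  "matching_of E M \<longleftrightarrow> M \<subseteq> E \<and> matching M"

definition max_matching :: "'a set set \<Rightarrow> 'a set set \<Rightarrow> bool" where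
  "max_matching E M \<longleftrightarrow> matching_of E M \<and>
     (\<forall>M'. matching_of E M' \<longrightarrow> card M' \<le> card M)"

definition min_nonzero_degree :: "'a set set \<Rightarrow> 'a \<Rightarrow> bool" where
  "min_nonzero_degree E u \<longleftrightarrow> degree E u > 0 \<and>
     (\<forall>x. degree E x > 0 \<longrightarrow> degree E u \<le> degree E x)"

inductive mg_reach :: "'a set set \<Rightarrow> 'a set set \<Rightarrow> 'a set set \<Rightarrow> bool" for E where
  start: "mg_reach E E {}"
| step: "\<lbrakk> mg_reach E Ec M; Ec \<noteq> {}; min_nonzero_degree Ec u; {u, v} \<in> Ec \<rbrakk>
         \<Longrightarrow> mg_reach E {e\<in>Ec. u \<notin> e \<and> v \<notin> e} (insert {u, v} M)"

definition mingreedy_result :: "'a set set \<Rightarrow> 'a set set \<Rightarrow> bool" where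
  "mingreedy_result E M \<longleftrightarrow> mg_reach E {} M"

definition path_edges :: "'a list \<Rightarrow> 'a set set" where
  "path_edges ps = {{ps ! i, ps ! Suc i} | i. Suc i < length ps}"

text \<open>An M-M*-path: a connected component of (V, M \<union> Ms) that is an alternating
  path x_0 x_1 ... x_{2m+1} (m \<ge> 1) whose edges alternate M*, M, ..., M*
  (so m edges of M and m+1 edges of M*).  Being a whole component means
  that no other edge of M \<union> Ms touches a vertex of the path.\<close>
definition MMs_path :: "'a set set \<Rightarrow> 'a set set \<Rightarrow> 'a list \<Rightarrow> bool" where
  "MMs_path M Ms ps \<longleftrightarrow>
     distinct ps \<and> even (length ps) \<and> length ps \<ge> 4 \<and>
     (\<forall>i. Suc i < length ps \<longrightarrow>
        (even i \<longrightarrow> {ps ! i, ps ! Suc i} \<in> Ms - M) \<and>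
        (odd i \<longrightarrow> {ps ! i, ps ! Suc i} \<in> M - Ms)) \<and>
     (\<forall>e\<in>M \<union> Ms. e \<inter> set ps \<noteq> {} \<longrightarrow> e \<in> path_edges ps)"

text \<open>Every connected component of (V, M \<union> Ms) with an edge is either a single edge
  of M \<inter> Ms or an M-M*-path; equivalently, every edge of M \<union> Ms is in M \<inter> Ms
  (whose component is then that single edge, both being matchings) or lies on
  an M-M*-path component.\<close>
definition components_ok :: "'a set set \<Rightarrow> 'a set set \<Rightarrow> bool" where
  "components_ok M Ms \<longleftrightarrow>
     (\<forall>e\<in>M \<union> Ms. e \<in> M \<inter> Ms \<or> (\<exists>ps. MMs_path M Ms ps \<and> e \<in> path_edges ps))"

end

theory Submission
  imports Defs
begin

lemma reach_Ec:
  assumes "mg_reach E Ec M'"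
  shows "Ec = {e\<in>E. \<forall>f\<in>M'. e \<inter> f = {}}"
  using assms
proof (induction rule: mg_reach.induct)
  case start
  then show ?case by auto
next
  case (step Ec M' u v)
  then show ?case by auto
qed

lemma card_ge2:
  assumes "finite S" "x \<in> S" "y \<in> S" "x \<noteq> y"
  shows "2 \<le> card S"
proof -
  have "card {x,y} \<le> card S" using assms by (intro card_mono) auto
  then show ?thesis using assms(4) by simp
qed

lemma MMs_comp:
  assumes "MMs_path M Ms ps" "e \<in> M \<union> Ms" "e \<inter> set ps \<noteq> {}"
  shows "e \<in> path_edges ps"
proof -
  have "\<forall>e\<in>M \<union> Ms. e \<inter> set ps \<noteq> {} \<longrightarrow> e \<in> path_edges ps"
    using assms(1)[unfolded MMs_path_def, THEN conjunct2, THEN conjunct2, THEN conjunct2, THEN conjunct2] .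
  then show ?thesis using assms(2,3) by blast
qed

lemma reach_inv:
  assumes "mg_reach E Ec M'"
    and "M' \<subseteq> M"
    and P: "MMs_path M Ms ps"
    and "Ms \<subseteq> E" and finE: "finite E"
    and "w \<in> e0" "e0 \<in> E" "e0 \<subseteq> set ps"
    and degw: "degree E w \<le> 1"
  shows "\<forall>f\<in>M'. f \<inter> set ps = {}"
  using assms(1,2)
proof (induction rule: mg_reach.induct)
  case start
  then show ?case by auto
next
  case (step Ec M' u v)
  have IH: "\<forall>f\<in>M'. f \<inter> set ps = {}" using step by auto
  have Ec: "Ec = {e\<in>E. \<forall>f\<in>M'. e \<inter> f = {}}" using reach_Ec[OF step.hyps(1)] .
  have inEc: "e \<in> Ec" if "e \<in> E" "e \<subseteq> set ps" for e
    using that IH Ec by blast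
  have finEc: "finite Ec" using Ec finE by auto
  have uvM: "{u,v} \<in> M" using step.prems by auto
  have "{u,v} \<inter> set ps = {}"
  proof (rule ccontr)
    assume ne: "{u,v} \<inter> set ps \<noteq> {}"
    have "{u,v} \<in> path_edges ps" using MMs_comp[OF P _ ne] uvM by blast
    then obtain i where i: "{u,v} = {ps!i, ps!Suc i}" "Suc i < length ps"
      unfolding path_edges_def by blast
    have dist: "distinct ps" and ev: "even (length ps)" and
      alt: "\<And>i. Suc i < length ps \<Longrightarrow> (even i \<longrightarrow> {ps ! i, ps ! Suc i} \<in> Ms - M) \<and>
        (odd i \<longrightarrow> {ps ! i, ps ! Suc i} \<in> M - Ms)"
      using P unfolding MMs_path_def by auto
    have "odd i" using alt[OF i(2)] uvM i(1) by auto
    then obtain j where j: "i = Suc j" "even j" by (cases i) auto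
    have l3: "Suc (Suc (Suc j)) < length ps"
    proof -
      have "Suc (Suc (Suc j)) \<noteq> length ps" using ev j(2) by (metis even_Suc)
      then show ?thesis using i(2) j(1) by linarith
    qed
    define a b c d where "a = ps!j" "b = ps!Suc j" "c = ps!Suc (Suc j)" "d = ps!Suc(Suc (Suc j))"
    have mem: "a \<in> set ps" "b \<in> set ps" "c \<in> set ps" "d \<in> set ps"
      using l3 unfolding a_b_c_d_def by (auto intro!: nth_mem)
    have "{a,b} \<in> Ms" using alt[of j] j i(2) unfolding a_b_c_d_def by auto
    then have e1: "{a,b} \<in> Ec" using mem assms(4) by (intro inEc) auto
    have "{c,d} \<in> Ms" using alt[of "Suc (Suc j)"] j l3 unfolding a_b_c_d_def by auto
    then have e3: "{c,d} \<in> Ec" using mem assms(4) by (intro inEc) auto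
    have e2: "{b,c} \<in> Ec" using step.hyps(4) i j a_b_c_d_def by simp
    have ac: "a \<noteq> c" "b \<noteq> d" using dist l3 unfolding a_b_c_d_def by (simp_all add: nth_eq_iff_index_eq)
    have "e0 \<in> Ec" using inEc assms by auto
    then have "degree Ec w > 0" unfolding degree_def using finEc assms(6)
      by (subst card_gt_0_iff) auto
    moreover have "degree Ec w \<le> degree E w" unfolding degree_def
      using Ec finE by (intro card_mono) auto
    ultimately have "degree Ec u \<le> 1" using step.hyps(3) degw
      unfolding min_nonzero_degree_def by (meson order_trans)
    moreover have "u = b \<or> u = c" using i(1) j(1) unfolding a_b_c_d_def by (metis insertI1 insert_iff singletonD)
    ultimately show False
    proof (elim disjE)
      assume "degree Ec u \<le> 1" "u = b"
      moreover have "2 \<le> degree Ec u" unfolding degree_def using \<open>u = b\<close> e1 e2 finEc ac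
        by (intro card_ge2[of _ "{a,b}" "{b,c}"]) (auto simp: doubleton_eq_iff)
      ultimately show False by simp
    next
      assume "degree Ec u \<le> 1" "u = c"
      moreover have "2 \<le> degree Ec u" unfolding degree_def using \<open>u = c\<close> e3 e2 finEc ac
        by (intro card_ge2[of _ "{b,c}" "{c,d}"]) (auto simp: doubleton_eq_iff)
      ultimately show False by simp
    qed
  qed
  then show ?case using IH by auto
qed

theorem lemma2:
  fixes V :: "'a set" and E M Ms :: "'a set set" and ps :: "'a list" and w :: 'a
  assumes "simple_graph V E"
    and "mingreedy_result E M"
    and "max_matching E Ms"
    and "components_ok M Ms"
    and "MMs_path M Ms ps"
    and "w = hd ps \<or> w = last ps"
  shows "degree E w \<ge> 2 \<and> (\<exists>e\<in>E - (M \<union> Ms). w \<in> e)"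
proof -
  have P: "MMs_path M Ms ps" by fact
  have dist: "distinct ps" and ev: "even (length ps)" and len: "length ps \<ge> 4" and
      alt: "\<And>i. Suc i < length ps \<Longrightarrow> (even i \<longrightarrow> {ps ! i, ps ! Suc i} \<in> Ms - M) \<and>
        (odd i \<longrightarrow> {ps ! i, ps ! Suc i} \<in> M - Ms)"
    using P unfolding MMs_path_def by auto
  have l01: "0 < length ps" "1 < length ps" using len by linarith+
  have MsE: "Ms \<subseteq> E" using assms(3) unfolding max_matching_def matching_of_def by auto
  have finE: "finite E"
  proof -
    have "E \<subseteq> Pow V" using assms(1) unfolding simple_graph_def by auto
    moreover have "finite V" using assms(1) unfolding simple_graph_def by auto
    ultimately show ?thesis by (meson finite_Pow_iff finite_subset)
  qed
  obtain e0 where e0: "e0 \<in> Ms" "w \<in> e0" "e0 \<subseteq> set ps"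
    "\<forall>e\<in>path_edges ps. w\<in>e \<longrightarrow> e = e0"
  proof (cases "w = hd ps")
    case True
    have w: "w = ps!0" using True len by (metis hd_conv_nth list.size(3) not_numeral_le_zero)
    show ?thesis
    proof (rule that[of "{ps!0, ps!1}"])
      show "{ps!0, ps!1} \<in> Ms" using alt[of 0] len by auto
      show "w \<in> {ps!0, ps!1}" using w by simp
      show "{ps!0, ps!1} \<subseteq> set ps" using nth_mem[OF l01(1)] nth_mem[OF l01(2)] by simp
      show "\<forall>e\<in>path_edges ps. w\<in>e \<longrightarrow> e = {ps!0, ps!1}"
      proof (intro ballI impI)
        fix e assume "e \<in> path_edges ps" "w \<in> e"
        then obtain l where l: "e = {ps!l, ps!Suc l}" "Suc l < length ps"
          unfolding path_edges_def by blast
        have "w = ps!l \<or> w = ps!Suc l" using l \<open>w \<in> e\<close> by auto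
        then have "l = 0" using w dist l(2) l01 by (auto simp: nth_eq_iff_index_eq)
        then show "e = {ps!0, ps!1}" using l by simp
      qed
    qed
  next
    case False
    then have wl: "w = last ps" using assms(6) by auto
    define n where "n = length ps - 2"
    have n: "length ps = Suc (Suc n)" using len unfolding n_def by arith
    have w: "w = ps!Suc n" using wl n by (metis diff_Suc_1 last_conv_nth list.size(3) nat.distinct(1))
    have evn: "even n" using ev n by auto
    show ?thesis
    proof (rule that[of "{ps!n, ps!Suc n}"])
      show "{ps!n, ps!Suc n} \<in> Ms" using alt[of n] n evn by auto
      show "w \<in> {ps!n, ps!Suc n}" using w by simp
      show "{ps!n, ps!Suc n} \<subseteq> set ps" using n by (simp add: nth_mem)
      show "\<forall>e\<in>path_edges ps. w\<in>e \<longrightarrow> e = {ps!n, ps!Suc n}"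
      proof (intro ballI impI)
        fix e assume "e \<in> path_edges ps" "w \<in> e"
        then obtain l where l: "e = {ps!l, ps!Suc l}" "Suc l < length ps"
          unfolding path_edges_def by blast
        have "w = ps!l \<or> w = ps!Suc l" using l \<open>w \<in> e\<close> by auto
        then have "l = n" using w dist l(2) n by (auto simp: nth_eq_iff_index_eq)
        then show "e = {ps!n, ps!Suc n}" using l by simp
      qed
    qed
  qed
  have deg: "degree E w \<ge> 2"
  proof (rule ccontr)
    assume "\<not> 2 \<le> degree E w"
    then have d1: "degree E w \<le> 1" by simp
    have "mg_reach E {} M" using assms(2) unfolding mingreedy_result_def .
    from reach_inv[OF this order_refl P MsE finE e0(2) _ e0(3) d1] e0(1) MsE
    have inv: "\<forall>f\<in>M. f \<inter> set ps = {}" by auto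
    have "{ps!1, ps!2} \<in> M" using alt[of 1] len by (auto simp: numeral_2_eq_2)
    moreover have "ps!1 \<in> set ps" using nth_mem[OF l01(2)] .
    ultimately show False using inv by auto
  qed
  obtain e where e: "e \<in> E" "w \<in> e" "e \<noteq> e0"
  proof -
    have "\<not> {x\<in>E. w \<in> x} \<subseteq> {e0}"
    proof
      assume "{x\<in>E. w \<in> x} \<subseteq> {e0}"
      then have "card {x\<in>E. w \<in> x} \<le> card {e0}" by (intro card_mono) auto
      then show False using deg unfolding degree_def by simp
    qed
    then show ?thesis using that by blast
  qed
  have "e \<notin> M \<union> Ms"
  proof
    assume "e \<in> M \<union> Ms"
    moreover have "e \<inter> set ps \<noteq> {}" using e(2) e0(2,3) by auto
    ultimately have "e \<in> path_edges ps" using MMs_comp[OF P] by blast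
    then show False using e0(4) e by auto
  qed
  then show ?thesis using deg e by auto
qed

end
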